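(* Let $\mathbf{A}\in\mathbb{R}^{m\times n}$ have rows $\mathbf{a}_1^\mathsf{T},\dots,\mathbf{a}_m^\mathsf{T}$ and let $\lambda>\max_{l}\|\mathbf{a}_l\|_\infty$. Consider $$\text{(P)}\quad \min_{\boldsymbol{x}\in\{-1,1\}^n}\ \max_{l\in\{1,\dots,m\}}\mathbf{a}_l^\mathsf{T}\boldsymbol{x},\qquad \text{(P}_\lambda\text{)}\quad \min_{\boldsymbol{x}\in[-1,1]^n}\ \max_{l\in\{1,\dots,m\}}\mathbf{a}_l^\mathsf{T}\boldsymbol{x}-\lambda\|\boldsymbol{x}\|_1.$$ Then every optimal solution of (P) is an optimal solution of (P$_\lambda$), and every optimal solution of (P$_\lambda$) is an optimal solution of (P). *)

theory Defs
  imports "HOL-Analysis.Analysis"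
begin

definition maxrow :: "real^'n^'m \<Rightarrow> real^'n \<Rightarrow> real" where
  "maxrow A x = (MAX l\<in>UNIV. (A $ l) \<bullet> x)"

definition linf_norm :: "real^'n \<Rightarrow> real" where
  "linf_norm v = (MAX i\<in>UNIV. \<bar>v $ i\<bar>)"

definition l1_norm :: "real^'n \<Rightarrow> real" where
  "l1_norm x = (\<Sum>i\<in>UNIV. \<bar>x $ i\<bar>)"

definition sign_vectors :: "(real^'n) set" where
  "sign_vectors = {x. \<forall>i. x $ i \<in> {-1, 1}}"

definition box_vectors :: "(real^'n) set" where
  "box_vectors = {x. \<forall>i. -1 \<le> x $ i \<and> x $ i \<le> 1}"

definition is_minimizer :: "'a set \<Rightarrow> ('a \<Rightarrow> real) \<Rightarrow> 'a \<Rightarrow> bool" where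
  "is_minimizer S f x \<longleftrightarrow> x \<in> S \<and> (\<forall>y\<in>S. f x \<le> f y)"

end

theory Submission
  imports Defs
begin

lemma maxrow_ge: "(A $ l) \<bullet> x \<le> maxrow A x"
  unfolding maxrow_def by (rule Max_ge) auto

lemma maxrow_attained: "\<exists>l. maxrow A x = (A $ l) \<bullet> x"
proof -
  have "maxrow A x \<in> (\<lambda>l. (A $ l) \<bullet> x) ` UNIV"
    unfolding maxrow_def by (rule Max_in) auto
  then show ?thesis by auto
qed

lemma linf_ge: "\<bar>v $ i\<bar> \<le> linf_norm v"
  unfolding linf_norm_def by (rule Max_ge) auto

definition rnd :: "real^'n \<Rightarrow> real^'n" where
  "rnd x = (\<chi> i. if x $ i \<ge> 0 then 1 else -1)"

lemma rnd_sign: "rnd x \<in> sign_vectors"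
  unfolding rnd_def sign_vectors_def by auto

lemma l1_sign: "z \<in> sign_vectors \<Longrightarrow> l1_norm z = real CARD('n)"
  for z :: "real^'n"
proof -
  assume "z \<in> sign_vectors"
  then have "\<And>i. z $ i = -1 \<or> z $ i = 1" unfolding sign_vectors_def by auto
  then have "\<And>i. \<bar>z $ i\<bar> = 1" by (smt (verit))
  then show ?thesis unfolding l1_norm_def by simp
qed

lemma sign_box: "sign_vectors \<subseteq> box_vectors"
proof
  fix x :: "real^'n" assume "x \<in> sign_vectors"
  then have "\<And>i. x $ i = -1 \<or> x $ i = 1" unfolding sign_vectors_def by auto
  then show "x \<in> box_vectors" unfolding box_vectors_def
  proof (intro CollectI allI)
    fix i from \<open>\<And>i. x $ i = -1 \<or> x $ i = 1\<close>[of i] show "-1 \<le> x $ i \<and> x $ i \<le> 1" by auto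
  qed
qed

lemma rnd_D:
  fixes x :: "real^'n"
  assumes "x \<in> box_vectors"
  shows "l1_norm (rnd x) - l1_norm x = (\<Sum>i\<in>UNIV. 1 - \<bar>x $ i\<bar>)"
    and "\<And>i. \<bar>rnd x $ i - x $ i\<bar> = 1 - \<bar>x $ i\<bar>"
proof -
  have "l1_norm (rnd x) = (\<Sum>i\<in>(UNIV::'n set). 1)"
    using l1_sign[OF rnd_sign[of x]] by simp
  then show "l1_norm (rnd x) - l1_norm x = (\<Sum>i\<in>UNIV. 1 - \<bar>x $ i\<bar>)"
    unfolding l1_norm_def by (simp add: sum_subtractf)
  fix i
  show "\<bar>rnd x $ i - x $ i\<bar> = 1 - \<bar>x $ i\<bar>"
    using assms unfolding rnd_def box_vectors_def
    by (cases "x $ i \<ge> 0") auto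
qed

lemma row_bound:
  fixes x :: "real^'n" and a :: "real^'n"
  assumes "x \<in> box_vectors"
  shows "a \<bullet> rnd x \<le> a \<bullet> x + linf_norm a * (l1_norm (rnd x) - l1_norm x)"
proof -
  have "a \<bullet> rnd x - a \<bullet> x = (\<Sum>i\<in>UNIV. a $ i * (rnd x $ i - x $ i))"
    by (simp add: inner_vec_def sum_subtractf right_diff_distrib)
  also have "\<dots> \<le> (\<Sum>i\<in>UNIV. linf_norm a * (1 - \<bar>x $ i\<bar>))"
  proof (rule sum_mono)
    fix i
    have "a $ i * (rnd x $ i - x $ i) \<le> \<bar>a $ i\<bar> * \<bar>rnd x $ i - x $ i\<bar>"
      by (metis abs_ge_self abs_mult)
    also have "\<dots> \<le> linf_norm a * \<bar>rnd x $ i - x $ i\<bar>"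
      by (rule mult_right_mono[OF linf_ge]) auto
    finally show "a $ i * (rnd x $ i - x $ i) \<le> linf_norm a * (1 - \<bar>x $ i\<bar>)"
      using rnd_D(2)[OF assms] by simp
  qed
  also have "\<dots> = linf_norm a * (l1_norm (rnd x) - l1_norm x)"
    using rnd_D(1)[OF assms] by (simp add: sum_distrib_left)
  finally show ?thesis by simp
qed

lemma key:
  fixes A :: "real^'n^'m" and x :: "real^'n"
  assumes lam: "\<forall>l. linf_norm (A $ l) < lam" and x: "x \<in> box_vectors"
  shows "maxrow A (rnd x) - lam * l1_norm (rnd x) \<le> maxrow A x - lam * l1_norm x"
    and "x \<notin> sign_vectors \<Longrightarrow>
         maxrow A (rnd x) - lam * l1_norm (rnd x) < maxrow A x - lam * l1_norm x"
proof -
  obtain l where l: "maxrow A (rnd x) = (A $ l) \<bullet> rnd x" using maxrow_attained by blast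
  define D where "D = l1_norm (rnd x) - l1_norm x"
  have D0: "D \<ge> 0"
    unfolding D_def rnd_D(1)[OF x] using x unfolding box_vectors_def
    by (intro sum_nonneg) (auto simp: abs_le_iff)
  have b: "maxrow A (rnd x) \<le> maxrow A x + linf_norm (A $ l) * D"
    using row_bound[OF x, of "A $ l"] maxrow_ge[of A l x] l unfolding D_def by linarith
  have "linf_norm (A $ l) * D \<le> lam * D"
    using lam D0 by (intro mult_right_mono) (auto simp: less_imp_le)
  then show "maxrow A (rnd x) - lam * l1_norm (rnd x) \<le> maxrow A x - lam * l1_norm x"
    using b unfolding D_def right_diff_distrib by linarith
  assume ns: "x \<notin> sign_vectors"
  then obtain i where i: "x $ i \<notin> {-1, 1}" unfolding sign_vectors_def by auto
  have "-1 \<le> x $ i" "x $ i \<le> 1" using x unfolding box_vectors_def by auto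
  then have "0 < 1 - \<bar>x $ i\<bar>" using i by (auto simp: abs_if)
  also have "\<dots> \<le> D"
    unfolding D_def rnd_D(1)[OF x] using x unfolding box_vectors_def
    by (intro member_le_sum) (auto simp: abs_le_iff)
  finally have "D > 0" .
  then have "linf_norm (A $ l) * D < lam * D"
    using lam by (intro mult_strict_right_mono) auto
  then show "maxrow A (rnd x) - lam * l1_norm (rnd x) < maxrow A x - lam * l1_norm x"
    using b unfolding D_def right_diff_distrib by linarith
qed

theorem theorem3:
  fixes A :: "real^'n^'m" and lam :: real
  assumes "\<forall>l. linf_norm (A $ l) < lam"
  shows "(\<forall>x. is_minimizer sign_vectors (maxrow A) x
              \<longrightarrow> is_minimizer box_vectors (\<lambda>x. maxrow A x - lam * l1_norm x) x)
       \<and> (\<forall>x. is_minimizer box_vectors (\<lambda>x. maxrow A x - lam * l1_norm x) x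
              \<longrightarrow> is_minimizer sign_vectors (maxrow A) x)"
proof (intro conjI allI impI)
  fix x :: "real^'n"
  assume m: "is_minimizer sign_vectors (maxrow A) x"
  then have xs: "x \<in> sign_vectors" and le: "\<forall>y\<in>sign_vectors. maxrow A x \<le> maxrow A y"
    unfolding is_minimizer_def by auto
  show "is_minimizer box_vectors (\<lambda>x. maxrow A x - lam * l1_norm x) x"
    unfolding is_minimizer_def
  proof (intro conjI ballI)
    show "x \<in> box_vectors" using xs sign_box by auto
    fix y :: "real^'n" assume y: "y \<in> box_vectors"
    have "maxrow A x \<le> maxrow A (rnd y)" using le rnd_sign by blast
    show "maxrow A x - lam * l1_norm x \<le> maxrow A y - lam * l1_norm y"
    proof -
      have "lam * l1_norm x = lam * l1_norm (rnd y)"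
        using l1_sign[OF xs] l1_sign[OF rnd_sign[of y]] by simp
      then show ?thesis using \<open>maxrow A x \<le> maxrow A (rnd y)\<close> key(1)[OF assms y] by linarith
    qed
  qed
next
  fix x :: "real^'n"
  assume m: "is_minimizer box_vectors (\<lambda>x. maxrow A x - lam * l1_norm x) x"
  then have xb: "x \<in> box_vectors"
    and le: "\<forall>y\<in>box_vectors. maxrow A x - lam * l1_norm x \<le> maxrow A y - lam * l1_norm y"
    unfolding is_minimizer_def by auto
  have xs: "x \<in> sign_vectors"
  proof (rule ccontr)
    assume "x \<notin> sign_vectors"
    from key(2)[OF assms xb this] le rnd_sign[of x] sign_box show False by force
  qed
  show "is_minimizer sign_vectors (maxrow A) x"
    unfolding is_minimizer_def
  proof (intro conjI ballI)
    show "x \<in> sign_vectors" by fact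
    fix z :: "real^'n" assume z: "z \<in> sign_vectors"
    then show "maxrow A x \<le> maxrow A z"
      using le sign_box l1_sign[OF xs] l1_sign[OF z] by force
  qed
qed

end
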